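(* Let $\mathcal M\subseteq\mathcal B(\mathcal H)$ be a countably decomposable, properly infinite, semifinite von Neumann algebra with a faithful normal semifinite tracial weight $\tau$. Let $H$ be a self-adjoint element of $\mathscr A(\mathcal M)$ with spectral resolution $\{E(\lambda)\}_{\lambda\in\mathbb R}$, and let $\mathcal A$ be the von Neumann subalgebra of $\mathcal M$ generated by $\{E(\lambda)\}_{\lambda\in\mathbb R}$. Then $P^\infty_{ac}(H)\in\mathcal A'\cap\mathcal M$.
   Context: $\mathscr A(\mathcal M)$ is the set of densely defined closed operators affiliated with $\mathcal M$; $\mathcal A'$ denotes the commutant of $\mathcal A$ in $\mathcal B(\mathcal H)$. A projection $P\in\mathcal M$ is a norm absolutely continuous projection with respect to $H$ if $\lambda\mapsto PE(\lambda)P$ from $\mathbb R$ into $\mathcal M$ is locally absolutely continuous in operator norm (for all $a<b$, $\epsilon>0$ there is $\delta>0$ with $\sum_i\|PE(b_i)P-PE(a_i)P\|<\epsilon$ for every finite family of disjoint intervals $(a_i,b_i)\subseteq[a,b]$ with $\sum_i(b_i-a_i)<\delta$); $P^\infty_{ac}(H)$ is the supremum of all such projections. *)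

theory Defs
  imports "HOL-Analysis.Analysis"
begin

text \<open>A complex Hilbert space: a real Banach space carrying a complex scalar
multiplication (extending the real one) and a complex inner product
(conjugate-linear in the first, linear in the second argument) inducing the norm.\<close>

class chilbert = banach +
  fixes cscale :: "complex \<Rightarrow> 'a \<Rightarrow> 'a"
    and cinner :: "'a \<Rightarrow> 'a \<Rightarrow> complex"
  assumes cscale_add_right: "cscale c (x + y) = cscale c x + cscale c y"
    and cscale_add_left: "cscale (c + d) x = cscale c x + cscale d x"
    and cscale_cscale: "cscale c (cscale d x) = cscale (c * d) x"
    and cscale_one: "cscale 1 x = x"
    and cscale_of_real: "cscale (complex_of_real r) x = scaleR r x"
    and cinner_add_right: "cinner x (y + z) = cinner x y + cinner x z"
    and cinner_cscale_right: "cinner x (cscale c y) = c * cinner x y"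
    and cinner_commute: "cinner x y = cnj (cinner y x)"
    and norm_cinner: "complex_of_real ((norm x)\<^sup>2) = cinner x x"

definition bop :: "('a::chilbert \<Rightarrow> 'a) set" where
  "bop = {T. bounded_linear T \<and> (\<forall>c x. T (cscale c x) = cscale c (T x))}"

definition adj :: "('a::chilbert \<Rightarrow> 'a) \<Rightarrow> ('a \<Rightarrow> 'a)" where
  "adj T = (THE S. \<forall>x y. cinner (T x) y = cinner x (S y))"

definition positive_op :: "('a::chilbert \<Rightarrow> 'a) \<Rightarrow> bool" where
  "positive_op T \<longleftrightarrow> T \<in> bop \<and> (\<forall>x. Im (cinner x (T x)) = 0 \<and> Re (cinner x (T x)) \<ge> 0)"

definition op_le :: "('a::chilbert \<Rightarrow> 'a) \<Rightarrow> ('a \<Rightarrow> 'a) \<Rightarrow> bool" where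
  "op_le S T \<longleftrightarrow> S \<in> bop \<and> T \<in> bop \<and> adj S = S \<and> adj T = T \<and> positive_op (\<lambda>x. T x - S x)"

definition is_proj :: "('a::chilbert \<Rightarrow> 'a) \<Rightarrow> bool" where
  "is_proj P \<longleftrightarrow> P \<in> bop \<and> P \<circ> P = P \<and> adj P = P"

definition commutant :: "('a::chilbert \<Rightarrow> 'a) set \<Rightarrow> ('a \<Rightarrow> 'a) set" where
  "commutant S = {T \<in> bop. \<forall>X\<in>S. T \<circ> X = X \<circ> T}"

text \<open>A von Neumann algebra: a self-adjoint set of bounded operators equal to its
double commutant (equivalently, by the bicommutant theorem, a weak-operator closed
unital *-subalgebra of \<open>\<B>(\<H>)\<close>).\<close>
definition von_neumann_algebra :: "('a::chilbert \<Rightarrow> 'a) set \<Rightarrow> bool" where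
  "von_neumann_algebra M \<longleftrightarrow> M \<subseteq> bop \<and> (\<forall>T\<in>M. adj T \<in> M) \<and> commutant (commutant M) = M"

definition vN_generated :: "('a::chilbert \<Rightarrow> 'a) set \<Rightarrow> ('a \<Rightarrow> 'a) set \<Rightarrow> ('a \<Rightarrow> 'a) set" where
  "vN_generated M S = \<Inter>{N. von_neumann_algebra N \<and> N \<subseteq> M \<and> S \<subseteq> N}"

definition countably_decomposable :: "('a::chilbert \<Rightarrow> 'a) set \<Rightarrow> bool" where
  "countably_decomposable M \<longleftrightarrow>
     (\<forall>F. F \<subseteq> {P \<in> M. is_proj P \<and> P \<noteq> (\<lambda>x. 0)} \<and> (\<forall>P\<in>F. \<forall>Q\<in>F. P \<noteq> Q \<longrightarrow> P \<circ> Q = (\<lambda>x. 0))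
          \<longrightarrow> countable F)"

definition mvn_equiv :: "('a::chilbert \<Rightarrow> 'a) set \<Rightarrow> ('a \<Rightarrow> 'a) \<Rightarrow> ('a \<Rightarrow> 'a) \<Rightarrow> bool" where
  "mvn_equiv M P Q \<longleftrightarrow> (\<exists>V\<in>M. adj V \<circ> V = P \<and> V \<circ> adj V = Q)"

definition infinite_proj :: "('a::chilbert \<Rightarrow> 'a) set \<Rightarrow> ('a \<Rightarrow> 'a) \<Rightarrow> bool" where
  "infinite_proj M P \<longleftrightarrow> (\<exists>Q\<in>M. is_proj Q \<and> Q \<circ> P = Q \<and> Q \<noteq> P \<and> mvn_equiv M P Q)"

definition properly_infinite :: "('a::chilbert \<Rightarrow> 'a) set \<Rightarrow> bool" where
  "properly_infinite M \<longleftrightarrow>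
     (\<forall>C \<in> M \<inter> commutant M. is_proj C \<and> C \<noteq> (\<lambda>x. 0) \<longrightarrow> infinite_proj M C)"

definition faithful_normal_semifinite_trace ::
  "('a::chilbert \<Rightarrow> 'a) set \<Rightarrow> (('a \<Rightarrow> 'a) \<Rightarrow> ennreal) \<Rightarrow> bool" where
  "faithful_normal_semifinite_trace M \<tau> \<longleftrightarrow>
     \<comment> \<open>weight on the positive part \<open>M\<^sub>+\<close>\<close>
     (\<forall>X\<in>M. \<forall>Y\<in>M. positive_op X \<and> positive_op Y \<longrightarrow> \<tau> (\<lambda>x. X x + Y x) = \<tau> X + \<tau> Y) \<and>
     (\<forall>X\<in>M. \<forall>c::real. positive_op X \<and> c \<ge> 0 \<longrightarrow> \<tau> (\<lambda>x. c *\<^sub>R X x) = ennreal c * \<tau> X) \<and>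
     \<comment> \<open>tracial\<close>
     (\<forall>X\<in>M. \<tau> (adj X \<circ> X) = \<tau> (X \<circ> adj X)) \<and>
     \<comment> \<open>faithful\<close>
     (\<forall>X\<in>M. positive_op X \<and> \<tau> X = 0 \<longrightarrow> X = (\<lambda>x. 0)) \<and>
     \<comment> \<open>normal: \<open>\<tau>(sup X\<^sub>i) = sup \<tau>(X\<^sub>i)\<close> for bounded increasing nets in \<open>M\<^sub>+\<close>\<close>
     (\<forall>D X. D \<noteq> {} \<and> D \<subseteq> {Y\<in>M. positive_op Y} \<and>
            (\<forall>Y1\<in>D. \<forall>Y2\<in>D. \<exists>Y3\<in>D. op_le Y1 Y3 \<and> op_le Y2 Y3) \<and>
            (\<forall>Y\<in>D. op_le Y X) \<and>
            (\<forall>Z. (\<forall>Y\<in>D. op_le Y Z) \<longrightarrow> op_le X Z)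
        \<longrightarrow> \<tau> X = (SUP Y\<in>D. \<tau> Y)) \<and>
     \<comment> \<open>semifinite\<close>
     (\<forall>X\<in>M. positive_op X \<and> X \<noteq> (\<lambda>x. 0) \<longrightarrow>
        (\<exists>Y\<in>M. positive_op Y \<and> Y \<noteq> (\<lambda>x. 0) \<and> op_le Y X \<and> \<tau> Y < \<infinity>))"

text \<open>\<open>E\<close> is the spectral resolution of a self-adjoint operator affiliated with \<open>M\<close>:
an increasing, strongly right-continuous family of projections in \<open>M\<close> tending strongly
to \<open>0\<close> at \<open>-\<infinity>\<close> and to \<open>I\<close> at \<open>+\<infinity>\<close>.\<close>
definition affiliated_spectral_resolution ::
  "('a::chilbert \<Rightarrow> 'a) set \<Rightarrow> (real \<Rightarrow> ('a \<Rightarrow> 'a)) \<Rightarrow> bool" where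
  "affiliated_spectral_resolution M E \<longleftrightarrow>
     (\<forall>s. E s \<in> M \<and> is_proj (E s)) \<and>
     (\<forall>s t. s \<le> t \<longrightarrow> E s \<circ> E t = E s) \<and>
     (\<forall>s x. ((\<lambda>u. E u x) \<longlongrightarrow> E s x) (at_right s)) \<and>
     (\<forall>x. ((\<lambda>u. E u x) \<longlongrightarrow> 0) at_bot) \<and>
     (\<forall>x. ((\<lambda>u. E u x) \<longlongrightarrow> x) at_top)"

definition norm_ac_proj ::
  "('a::chilbert \<Rightarrow> 'a) set \<Rightarrow> (real \<Rightarrow> ('a \<Rightarrow> 'a)) \<Rightarrow> ('a \<Rightarrow> 'a) \<Rightarrow> bool" where
  "norm_ac_proj M E P \<longleftrightarrow> P \<in> M \<and> is_proj P \<and>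
     (\<forall>a b \<epsilon>. a < b \<and> \<epsilon> > 0 \<longrightarrow> (\<exists>\<delta>>0.
        \<forall>(n::nat) (aa::nat \<Rightarrow> real) (bb::nat \<Rightarrow> real).
          (\<forall>i<n. a \<le> aa i \<and> aa i < bb i \<and> bb i \<le> b) \<and>
          (\<forall>i<n. \<forall>j<n. i \<noteq> j \<longrightarrow> bb i \<le> aa j \<or> bb j \<le> aa i) \<and>
          (\<Sum>i<n. bb i - aa i) < \<delta>
          \<longrightarrow> (\<Sum>i<n. onorm (\<lambda>x. P (E (bb i) (P x)) - P (E (aa i) (P x)))) < \<epsilon>))"

definition proj_sup :: "('a::chilbert \<Rightarrow> 'a) set \<Rightarrow> ('a \<Rightarrow> 'a)" where
  "proj_sup S = (THE P. is_proj P \<and> (\<forall>Q\<in>S. op_le Q P) \<and>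
                       (\<forall>R. is_proj R \<and> (\<forall>Q\<in>S. op_le Q R) \<longrightarrow> op_le P R))"

definition P_ac_inf :: "('a::chilbert \<Rightarrow> 'a) set \<Rightarrow> (real \<Rightarrow> ('a \<Rightarrow> 'a)) \<Rightarrow> ('a \<Rightarrow> 'a)" where
  "P_ac_inf M E = proj_sup {P. norm_ac_proj M E P}"

end

theory Submission
  imports Defs
begin


section \<open>Inner product algebra\<close>


lemma cinner_add_left: "cinner ((x::'a::chilbert) + y) z = cinner x z + cinner y z"
  by (metis cinner_add_right cinner_commute complex_cnj_add)

lemma cinner_cscale_left: "cinner (cscale c (x::'a::chilbert)) y = cnj c * cinner x y"
  by (metis cinner_cscale_right cinner_commute complex_cnj_cnj complex_cnj_mult)

lemma cinner_zero_right [simp]: "cinner (x::'a::chilbert) 0 = 0"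
  using cinner_add_right[of x 0 0] by simp

lemma cinner_zero_left [simp]: "cinner 0 (x::'a::chilbert) = 0"
  using cinner_add_left[of 0 0 x] by simp

lemma cscale_zero_right [simp]: "cscale c (0::'a::chilbert) = 0"
  using cscale_add_right[of c 0 0] by simp

lemma cscale_minus_right: "cscale c (- (x::'a::chilbert)) = - cscale c x"
  using cscale_add_right[of c x "-x"] by (metis neg_eq_iff_add_eq_0 cinner_zero_right cinner_zero_left cscale_zero_right add.right_inverse add.commute)

lemma cscale_diff_right: "cscale c ((x::'a::chilbert) - y) = cscale c x - cscale c y"
  using cscale_add_right[of c x "-y"] cscale_minus_right[of c y] by simp

lemma cscale_zero_left [simp]: "cscale 0 (x::'a::chilbert) = 0"
  using cscale_of_real[of 0 x] by simp

lemma cinner_minus_right: "cinner (x::'a::chilbert) (- y) = - cinner x y"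
  using cinner_add_right[of x y "-y"] by (metis neg_eq_iff_add_eq_0 cinner_zero_right cinner_zero_left cscale_zero_right add.right_inverse add.commute)

lemma cinner_minus_left: "cinner (- (x::'a::chilbert)) y = - cinner x y"
  using cinner_add_left[of x "-x" y] by (metis neg_eq_iff_add_eq_0 cinner_zero_right cinner_zero_left cscale_zero_right add.right_inverse add.commute)

lemma cinner_diff_right: "cinner (x::'a::chilbert) (y - z) = cinner x y - cinner x z"
  using cinner_add_right[of x y "-z"] cinner_minus_right[of x z] by simp

lemma cinner_diff_left: "cinner ((x::'a::chilbert) - y) z = cinner x z - cinner y z"
  using cinner_add_left[of x "-y" z] cinner_minus_left[of y z] by simp

lemma cinner_scaleR_right: "cinner (x::'a::chilbert) (scaleR r y) = complex_of_real r * cinner x y"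
  by (metis cinner_cscale_right cscale_of_real)

lemma cinner_scaleR_left: "cinner (scaleR r (x::'a::chilbert)) y = complex_of_real r * cinner x y"
  by (metis cinner_cscale_left cscale_of_real complex_cnj_complex_of_real)

lemma cinner_self: "cinner (x::'a::chilbert) x = complex_of_real ((norm x)\<^sup>2)"
  by (rule norm_cinner[symmetric])

lemma cinner_self_eq_0: "cinner (x::'a::chilbert) x = 0 \<longleftrightarrow> x = 0"
  by (simp add: cinner_self)

lemma cinner_ext: "(\<And>x. cinner x a = cinner x b) \<Longrightarrow> a = (b::'a::chilbert)"
proof -
  assume h: "\<And>x. cinner x a = cinner x b"
  have "cinner (a - b) (a - b) = 0" using h[of "a - b"] by (simp add: cinner_diff_right)
  thus "a = b" by (simp add: cinner_self_eq_0)
qed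

lemma norm_sq_diff: "(norm ((a::'a::chilbert) - b))\<^sup>2 = (norm a)\<^sup>2 + (norm b)\<^sup>2 - 2 * Re (cinner a b)"
proof -
  have "complex_of_real ((norm (a - b))\<^sup>2) = cinner (a - b) (a - b)" by (rule norm_cinner)
  also have "\<dots> = cinner a a + cinner b b - cinner a b - cinner b a"
    by (simp add: cinner_diff_left cinner_diff_right)
  finally have "(norm ((a::'a::chilbert) - b))\<^sup>2 = Re (cinner a a + cinner b b - cinner a b - cinner b a)"
    by (metis Re_complex_of_real)
  also have "\<dots> = (norm a)\<^sup>2 + (norm b)\<^sup>2 - 2 * Re (cinner a b)"
    using cinner_commute[of b a] by (simp add: cinner_self)
  finally show ?thesis .
qed

lemma norm_sq_add: "(norm ((a::'a::chilbert) + b))\<^sup>2 = (norm a)\<^sup>2 + (norm b)\<^sup>2 + 2 * Re (cinner a b)"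
  using norm_sq_diff[of a "-b"] by (simp add: cinner_minus_right)

lemma norm_cscale: "norm (cscale c (x::'a::chilbert)) = cmod c * norm x"
proof -
  have "complex_of_real ((norm (cscale c x))\<^sup>2) = cinner (cscale c x) (cscale c x)"
    by (rule norm_cinner)
  also have "\<dots> = (cnj c * c) * cinner x x"
    by (simp add: cinner_cscale_left cinner_cscale_right mult.assoc)
  also have "cnj c * c = complex_of_real ((cmod c)\<^sup>2)"
    by (metis complex_norm_square mult.commute)
  also have "cinner x x = complex_of_real ((norm x)\<^sup>2)" by (rule cinner_self)
  finally have "complex_of_real ((norm (cscale c x))\<^sup>2) = complex_of_real ((cmod c * norm x)\<^sup>2)"
    by (simp only: of_real_mult[symmetric] power_mult_distrib)
  hence "(norm (cscale c x))\<^sup>2 = (cmod c * norm x)\<^sup>2" using of_real_eq_iff by blast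
  thus ?thesis by (simp add: power2_eq_iff_nonneg)
qed

lemma cauchy_schwarz: "cmod (cinner (x::'a::chilbert) y) \<le> norm x * norm y"
proof (cases "x = 0")
  case True thus ?thesis by simp
next
  case False
  define a where "a = cinner x y / complex_of_real ((norm x)\<^sup>2)"
  have nx: "norm x > 0" using False by simp
  define w where "w = y - cscale a x"
  have "cinner x w = 0"
    using nx by (simp add: w_def a_def cinner_diff_right cinner_cscale_right cinner_self)
  hence wx: "cinner w (cscale a x) = 0"
    by (simp add: cinner_cscale_right) (metis cinner_commute complex_cnj_zero)
  have "y = w + cscale a x" by (simp add: w_def)
  hence "(norm y)\<^sup>2 = (norm w)\<^sup>2 + (norm (cscale a x))\<^sup>2"
    using norm_sq_add[of w "cscale a x"] wx by simp
  hence "(norm (cscale a x))\<^sup>2 \<le> (norm y)\<^sup>2" by simp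
  hence "norm (cscale a x) \<le> norm y" by (simp add: power2_le_iff_abs_le)
  moreover have "cmod a = cmod (cinner x y) / (norm x)\<^sup>2"
    unfolding a_def norm_divide by (simp add: norm_power)
  hence "norm (cscale a x) = cmod (cinner x y) / norm x"
    using nx by (simp add: norm_cscale power2_eq_square)
  ultimately show ?thesis using nx by (simp add: divide_le_eq mult.commute)
qed



definition csubspace :: "'a::chilbert set \<Rightarrow> bool" where
  "csubspace K \<longleftrightarrow> 0 \<in> K \<and> (\<forall>x\<in>K. \<forall>y\<in>K. x + y \<in> K) \<and> (\<forall>c. \<forall>x\<in>K. cscale c x \<in> K)"

lemma csub_0: "csubspace K \<Longrightarrow> 0 \<in> K" by (simp add: csubspace_def)
lemma csub_add: "csubspace K \<Longrightarrow> x \<in> K \<Longrightarrow> y \<in> K \<Longrightarrow> x + y \<in> K" by (simp add: csubspace_def)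
lemma csub_cscale: "csubspace K \<Longrightarrow> x \<in> K \<Longrightarrow> cscale c x \<in> K" by (simp add: csubspace_def)
lemma csub_scaleR: "csubspace K \<Longrightarrow> x \<in> K \<Longrightarrow> scaleR r x \<in> K"
  by (metis csub_cscale cscale_of_real)
lemma csub_minus: "csubspace K \<Longrightarrow> x \<in> K \<Longrightarrow> - x \<in> K"
  using csub_scaleR[of K x "-1"] by simp
lemma csub_diff: "csubspace K \<Longrightarrow> x \<in> K \<Longrightarrow> y \<in> K \<Longrightarrow> x - y \<in> K"
  using csub_add[of K x "-y"] csub_minus[of K y] by simp

lemma parallelogram:
  "(norm ((a::'a::chilbert) + b))\<^sup>2 + (norm (a - b))\<^sup>2 = 2 * (norm a)\<^sup>2 + 2 * (norm b)\<^sup>2"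
  using norm_sq_add[of a b] norm_sq_diff[of a b] by simp

lemma closest_exists:
  fixes K :: "'a::chilbert set"
  assumes cl: "closed K" and cs: "csubspace K"
  shows "\<exists>p\<in>K. \<forall>k\<in>K. norm (x - p) \<le> norm (x - k)"
proof -
  define d where "d = Inf ((\<lambda>k. norm (x - k)) ` K)"
  have ne: "(\<lambda>k. norm (x - k)) ` K \<noteq> {}" using csub_0[OF cs] by blast
  have bdd: "bdd_below ((\<lambda>k. norm (x - k)) ` K)" by (rule bdd_belowI[of _ 0]) auto
  have dle: "d \<le> norm (x - k)" if "k \<in> K" for k
    unfolding d_def using bdd that by (intro cInf_lower) auto
  have d0: "0 \<le> d" unfolding d_def using ne by (intro cInf_greatest) auto
  have ex: "\<exists>k\<in>K. (norm (x - k))\<^sup>2 < d\<^sup>2 + inverse (real (Suc n))" for n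
  proof -
    have "d\<^sup>2 < d\<^sup>2 + inverse (real (Suc n))" by simp
    hence "d < sqrt (d\<^sup>2 + inverse (real (Suc n)))" using d0
      by (metis real_less_rsqrt)
    then obtain k where k: "k \<in> K" "norm (x - k) < sqrt (d\<^sup>2 + inverse (real (Suc n)))"
      using cInf_less_iff[OF ne bdd] unfolding d_def by auto
    hence "(norm (x - k))\<^sup>2 < d\<^sup>2 + inverse (real (Suc n))"
      by (metis norm_ge_zero real_sqrt_less_iff real_sqrt_abs abs_of_nonneg real_sqrt_pow2_iff
          power2_eq_square real_less_lsqrt real_sqrt_ge_zero)
    thus ?thesis using k by blast
  qed
  then obtain k where kK: "\<And>n. k n \<in> K"
    and kb: "\<And>n. (norm (x - k n))\<^sup>2 < d\<^sup>2 + inverse (real (Suc n))"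
    by metis
  have cb: "(norm (k n - k m))\<^sup>2 \<le> 2 * inverse (real (Suc n)) + 2 * inverse (real (Suc m))" for n m
  proof -
    define mid where "mid = scaleR (1/2) (k n + k m)"
    have "mid \<in> K" unfolding mid_def using cs kK by (intro csub_scaleR csub_add) auto
    hence "d \<le> norm (x - mid)" by (rule dle)
    hence "2 * d \<le> norm (scaleR 2 (x - mid))" by simp
    also have "scaleR 2 (x - mid) = (x - k n) + (x - k m)"
      unfolding mid_def by (simp add: algebra_simps scaleR_2)
    finally have "(2 * d)\<^sup>2 \<le> (norm ((x - k n) + (x - k m)))\<^sup>2"
      using d0 by (intro power_mono) auto
    moreover have "(norm ((x - k n) + (x - k m)))\<^sup>2 + (norm ((x - k n) - (x - k m)))\<^sup>2
        = 2 * (norm (x - k n))\<^sup>2 + 2 * (norm (x - k m))\<^sup>2" by (rule parallelogram)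
    moreover have "(x - k n) - (x - k m) = k m - k n" by simp
    moreover have "norm (k m - k n) = norm (k n - k m)" by (rule norm_minus_commute)
    ultimately show ?thesis using kb[of n] kb[of m] by (simp add: power_mult_distrib)
  qed
  have "Cauchy k"
  proof (rule CauchyI)
    fix e :: real assume e: "0 < e"
    obtain N :: nat where N: "4 / e\<^sup>2 < real N" using reals_Archimedean2 by blast
    have "\<forall>m\<ge>N. \<forall>n\<ge>N. norm (k m - k n) < e"
    proof (intro allI impI)
      fix m n assume mn: "N \<le> m" "N \<le> n"
      have e2: "0 < e\<^sup>2" using e by simp
      have "4 / e\<^sup>2 < real (Suc N)" using N by simp
      hence i: "inverse (real (Suc N)) < e\<^sup>2 / 4" using e2
        by (simp add: field_simps)
      have "inverse (real (Suc m)) \<le> inverse (real (Suc N))" using mn by (simp add: field_simps)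
      moreover have "inverse (real (Suc n)) \<le> inverse (real (Suc N))" using mn by (simp add: field_simps)
      ultimately have "(norm (k m - k n))\<^sup>2 < e\<^sup>2" using cb[of m n] i by linarith
      thus "norm (k m - k n) < e" using e by (metis less_le power_less_imp_less_base)
    qed
    thus "\<exists>M. \<forall>m\<ge>M. \<forall>n\<ge>M. norm (k m - k n) < e" by blast
  qed
  then obtain p where kp: "k \<longlonglongrightarrow> p" using Cauchy_convergent_iff convergent_def by blast
  have pK: "p \<in> K" using closed_sequentially[OF cl] kK kp by blast
  have "(\<lambda>n. (norm (x - k n))\<^sup>2) \<longlonglongrightarrow> (norm (x - p))\<^sup>2"
    by (intro tendsto_intros kp)
  moreover have "(\<lambda>n. d\<^sup>2 + inverse (real (Suc n))) \<longlonglongrightarrow> d\<^sup>2 + 0"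
    by (intro tendsto_add tendsto_const LIMSEQ_inverse_real_of_nat)
  ultimately have "(norm (x - p))\<^sup>2 \<le> d\<^sup>2 + 0"
    by (rule LIMSEQ_le) (use kb less_imp_le in blast)
  hence "norm (x - p) \<le> d" using d0 by (simp add: power2_le_iff_abs_le)
  thus ?thesis using pK dle by (meson order_trans)
qed

lemma closest_orth:
  fixes K :: "'a::chilbert set"
  assumes cs: "csubspace K" and pK: "p \<in> K" and pmin: "\<forall>k\<in>K. norm (x - p) \<le> norm (x - k)"
    and kK: "k \<in> K"
  shows "cinner k (x - p) = 0"
proof (rule ccontr)
  assume na: "cinner k (x - p) \<noteq> 0"
  define v where "v = x - p"
  define a where "a = cinner k v"
  have a0: "a \<noteq> 0" using na by (simp add: a_def v_def)
  have k0: "k \<noteq> 0" using a0 by (auto simp: a_def)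
  define r where "r = norm k"
  have r0: "0 < r" using k0 by (simp add: r_def)
  define c where "c = a / complex_of_real (r\<^sup>2)"
  define w where "w = cscale c k"
  have wK: "w \<in> K" unfolding w_def by (rule csub_cscale[OF cs kK])
  have "p + w \<in> K" by (rule csub_add[OF cs pK wK])
  hence "norm v \<le> norm (v - w)" using pmin by (simp add: v_def algebra_simps)
  hence "(norm v)\<^sup>2 \<le> (norm (v - w))\<^sup>2" by (simp add: power_mono)
  hence ineq: "2 * Re (cinner v w) \<le> (norm w)\<^sup>2" by (simp add: norm_sq_diff)
  have "cinner v w = c * cnj a"
    by (simp add: w_def a_def cinner_cscale_right) (metis cinner_commute)
  also have "\<dots> = complex_of_real ((cmod a)\<^sup>2 / r\<^sup>2)"
    unfolding c_def using complex_norm_square[of a, symmetric] by (simp del: of_real_power)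
  finally have re: "Re (cinner v w) = (cmod a)\<^sup>2 / r\<^sup>2" by simp
  have "norm w = cmod a / r\<^sup>2 * r"
    by (simp add: w_def norm_cscale c_def norm_divide norm_power r_def)
  hence nw: "(norm w)\<^sup>2 = (cmod a)\<^sup>2 / r\<^sup>2" using r0 by (simp add: power2_eq_square field_simps)
  have "0 < (cmod a)\<^sup>2 / r\<^sup>2" using a0 r0 by simp
  thus False using ineq re nw by linarith
qed

definition cproj :: "'a::chilbert set \<Rightarrow> 'a \<Rightarrow> 'a" where
  "cproj K x = (SOME p. p \<in> K \<and> (\<forall>k\<in>K. cinner k (x - p) = 0))"

lemma cproj_ex:
  fixes K :: "'a::chilbert set"
  assumes "closed K" "csubspace K"
  shows "cproj K x \<in> K \<and> (\<forall>k\<in>K. cinner k (x - cproj K x) = 0)"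
proof -
  obtain p where "p \<in> K" "\<forall>k\<in>K. norm (x - p) \<le> norm (x - k)" using closest_exists[OF assms] by blast
  hence "p \<in> K \<and> (\<forall>k\<in>K. cinner k (x - p) = 0)" using closest_orth[OF assms(2)] by blast
  thus ?thesis unfolding cproj_def by (rule someI)
qed

lemma cproj_unique:
  fixes K :: "'a::chilbert set"
  assumes "closed K" "csubspace K" and pK: "p \<in> K" and po: "\<forall>k\<in>K. cinner k (x - p) = 0"
  shows "cproj K x = p"
proof -
  let ?q = "cproj K x"
  have q: "?q \<in> K" "\<forall>k\<in>K. cinner k (x - ?q) = 0" using cproj_ex[OF assms(1,2)] by auto
  have d: "?q - p \<in> K" by (rule csub_diff[OF assms(2) q(1) pK])
  have "cinner (?q - p) (?q - p) = cinner (?q - p) (x - p) - cinner (?q - p) (x - ?q)"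
    by (simp add: cinner_diff_right)
  also have "\<dots> = 0" using po q(2) d by simp
  finally show ?thesis by (simp add: cinner_self_eq_0)
qed



lemma cscale_scaleR: "cscale c (scaleR r (x::'a::chilbert)) = scaleR r (cscale c x)"
  by (metis cscale_cscale cscale_of_real mult.commute)

lemma bl_add: "bounded_linear f \<Longrightarrow> f (x + y) = f x + f y"
  by (simp add: bounded_linear.linear linear_add)
lemma bl_zero: "bounded_linear f \<Longrightarrow> f 0 = 0"
  by (simp add: bounded_linear.linear linear_0)
lemma bl_diff: "bounded_linear f \<Longrightarrow> f (x - y) = f x - f y"
  by (simp add: bounded_linear.linear linear_diff)
lemma bl_scale: "bounded_linear f \<Longrightarrow> f (scaleR r x) = scaleR r (f x)"
  by (simp add: bounded_linear.linear linear_scale)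

lemma adj_char:
  assumes "\<And>x y. cinner (T x) y = cinner x (S y)"
  shows "adj T = S"
  unfolding adj_def
proof (rule the_equality)
  show "\<forall>x y. cinner (T x) y = cinner x (S y)" using assms by blast
next
  fix S' assume h: "\<forall>x y. cinner (T x) y = cinner x (S' y)"
  show "S' = S"
  proof
    fix y show "S' y = S y" by (rule cinner_ext) (metis h assms)
  qed
qed

context
  fixes K :: "'a::chilbert set"
  assumes cl: "closed K" and cs: "csubspace K"
begin

lemma cproj_in: "cproj K x \<in> K" using cproj_ex[OF cl cs] by blast
lemma cproj_orth: "k \<in> K \<Longrightarrow> cinner k (x - cproj K x) = 0" using cproj_ex[OF cl cs] by blast
lemma cproj_id: "x \<in> K \<Longrightarrow> cproj K x = x"
  by (rule cproj_unique[OF cl cs]) auto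

lemma cproj_add: "cproj K (x + y) = cproj K x + cproj K y"
proof (rule cproj_unique[OF cl cs])
  show "cproj K x + cproj K y \<in> K" by (intro csub_add[OF cs] cproj_in)
  show "\<forall>k\<in>K. cinner k (x + y - (cproj K x + cproj K y)) = 0"
  proof
    fix k assume k: "k \<in> K"
    have e: "x + y - (cproj K x + cproj K y) = (x - cproj K x) + (y - cproj K y)" by simp
    show "cinner k (x + y - (cproj K x + cproj K y)) = 0"
      unfolding e cinner_add_right using cproj_orth[OF k, of x] cproj_orth[OF k, of y] by simp
  qed
qed

lemma cproj_cscale: "cproj K (cscale c x) = cscale c (cproj K x)"
proof (rule cproj_unique[OF cl cs])
  show "cscale c (cproj K x) \<in> K" by (intro csub_cscale[OF cs] cproj_in)
  show "\<forall>k\<in>K. cinner k (cscale c x - cscale c (cproj K x)) = 0"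
    using cproj_orth by (simp add: cscale_diff_right[symmetric] cinner_cscale_right)
qed

lemma cproj_scaleR: "cproj K (scaleR r x) = scaleR r (cproj K x)"
  by (metis cproj_cscale cscale_of_real)

lemma cproj_pyth: "(norm x)\<^sup>2 = (norm (cproj K x))\<^sup>2 + (norm (x - cproj K x))\<^sup>2"
  using norm_sq_add[of "cproj K x" "x - cproj K x"] cproj_orth[OF cproj_in, of x] by simp

lemma cproj_norm: "norm (cproj K x) \<le> norm x"
proof -
  have "(norm (cproj K x))\<^sup>2 \<le> (norm x)\<^sup>2" using cproj_pyth[of x] by simp
  thus ?thesis by (rule power2_le_imp_le) simp
qed

lemma cproj_sym: "cinner (cproj K x) y = cinner x (cproj K y)"
proof -
  have "cinner (cproj K x) (y - cproj K y) = 0" by (rule cproj_orth[OF cproj_in])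
  moreover have "cinner (cproj K y) (x - cproj K x) = 0" by (rule cproj_orth[OF cproj_in])
  hence "cinner (x - cproj K x) (cproj K y) = 0" by (metis cinner_commute complex_cnj_zero)
  ultimately show ?thesis by (simp add: cinner_diff_right cinner_diff_left)
qed

lemma cproj_bop: "cproj K \<in> bop"
  unfolding bop_def
proof (intro CollectI conjI allI)
  show "bounded_linear (cproj K)"
    by (rule bounded_linear_intro[where K=1]) (auto simp: cproj_add cproj_scaleR cproj_norm)
  fix c x show "cproj K (cscale c x) = cscale c (cproj K x)" by (rule cproj_cscale)
qed

lemma cproj_idem: "cproj K (cproj K x) = cproj K x"
  by (rule cproj_id[OF cproj_in])

lemma cproj_is_proj: "is_proj (cproj K)"
  unfolding is_proj_def using cproj_bop cproj_idem adj_char[of "cproj K" "cproj K"] cproj_sym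
  by (auto simp: fun_eq_iff)

end

lemma riesz:
  fixes f :: "'a::chilbert \<Rightarrow> complex"
  assumes bl: "bounded_linear f" and cl: "\<And>c x. f (cscale c x) = c * f x"
  shows "\<exists>z. \<forall>x. f x = cinner z x"
proof (cases "\<forall>x. f x = 0")
  case True thus ?thesis by (intro exI[of _ 0]) simp
next
  case False
  then obtain w where fw: "f w \<noteq> 0" by blast
  define K where "K = f -` {0}"
  have Kcl: "closed K" unfolding K_def
    by (rule continuous_closed_vimage) (auto intro: linear_continuous_at bl)
  have Kcs: "csubspace K" unfolding K_def csubspace_def
    using bl_zero[OF bl] bl_add[OF bl] cl by auto
  define u where "u = w - cproj K w"
  have uo: "cinner k u = 0" if "k \<in> K" for k using cproj_orth[OF Kcl Kcs that] by (simp add: u_def)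
  have fu: "f u = f w" using cproj_in[OF Kcl Kcs, of w]
    by (simp add: u_def bl_diff[OF bl] K_def)
  have u0: "u \<noteq> 0" using fu fw bl_zero[OF bl] by auto
  define r where "r = (norm u)\<^sup>2"
  have r0: "r \<noteq> 0" using u0 by (simp add: r_def)
  have "f x = cinner (cscale (cnj (f u) / complex_of_real r) u) x" for x
  proof -
    have "x - cscale (f x / f u) u \<in> K" unfolding K_def
      using fu fw by (simp add: bl_diff[OF bl] cl)
    hence "cinner (x - cscale (f x / f u) u) u = 0" by (rule uo)
    hence "cinner u (x - cscale (f x / f u) u) = 0" by (metis cinner_commute complex_cnj_zero)
    hence "cinner u x = f x / f u * complex_of_real r"
      by (simp add: cinner_diff_right cinner_cscale_right cinner_self r_def)
    thus ?thesis using fw fu r0 by (simp add: cinner_cscale_left field_simps)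
  qed
  thus ?thesis by blast
qed

lemma bop_linear:
  assumes "T \<in> bop" shows "bounded_linear T" and "T (cscale c x) = cscale c (T x)"
  using assms by (auto simp: bop_def)

lemma adj_ex:
  fixes T :: "'a::chilbert \<Rightarrow> 'a"
  assumes T: "T \<in> bop"
  shows "\<exists>S. \<forall>x y. cinner (T x) y = cinner x (S y)"
proof -
  have bl: "bounded_linear T" and tc: "\<And>c x. T (cscale c x) = cscale c (T x)"
    using bop_linear[OF T] by auto
  obtain B where B: "\<And>x. norm (T x) \<le> norm x * B" using bounded_linear.bounded[OF bl] by blast
  have "\<forall>y. \<exists>z. \<forall>x. cinner (T x) y = cinner x z"
  proof
    fix y
    have "bounded_linear (\<lambda>x. cinner y (T x))"
    proof (rule bounded_linear_intro[where K="norm y * B"])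
      show "cinner y (T (x + z)) = cinner y (T x) + cinner y (T z)" for x z
        by (simp add: bl_add[OF bl] cinner_add_right)
      show "cinner y (T (scaleR r x)) = scaleR r (cinner y (T x))" for r x
        by (simp add: bl_scale[OF bl] cinner_scaleR_right scaleR_conv_of_real)
      show "norm (cinner y (T x)) \<le> norm x * (norm y * B)" for x
        using cauchy_schwarz[of y "T x"] B[of x]
        by (smt (verit, ccfv_SIG) mult.assoc mult.left_commute mult_left_mono norm_ge_zero)
    qed
    moreover have "cinner y (T (cscale c x)) = c * cinner y (T x)" for c x
      by (simp add: tc cinner_cscale_right)
    ultimately obtain z where "\<forall>x. cinner y (T x) = cinner z x" using riesz by blast
    hence "\<forall>x. cinner (T x) y = cinner x z" by (metis cinner_commute)
    thus "\<exists>z. \<forall>x. cinner (T x) y = cinner x z" by blast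
  qed
  thus ?thesis by metis
qed

lemma adj_prop: "T \<in> bop \<Longrightarrow> cinner (T x) y = cinner x (adj T y)"
  by (metis adj_char adj_ex)

lemma adj_prop': "T \<in> bop \<Longrightarrow> cinner x (T y) = cinner (adj T x) y"
  by (metis adj_prop cinner_commute)

lemma adj_bop:
  fixes T :: "'a::chilbert \<Rightarrow> 'a"
  assumes T: "T \<in> bop" shows "adj T \<in> bop"
proof -
  let ?S = "adj T"
  have bl: "bounded_linear T" using bop_linear[OF T] by auto
  obtain B where B: "\<And>x. norm (T x) \<le> norm x * B" and Bp: "B > 0"
    using bounded_linear.pos_bounded[OF bl] by blast
  have add: "?S (a + b) = ?S a + ?S b" for a b
    by (rule cinner_ext) (simp add: adj_prop[OF T, symmetric] cinner_add_right)
  have cs: "?S (cscale c a) = cscale c (?S a)" for c a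
    by (rule cinner_ext) (simp add: adj_prop[OF T, symmetric] cinner_cscale_right)
  have bd: "norm (?S y) \<le> norm y * B" for y
  proof -
    have "complex_of_real ((norm (?S y))\<^sup>2) = cinner (T (?S y)) y"
      by (simp add: adj_prop[OF T] cinner_self)
    hence "(norm (?S y))\<^sup>2 \<le> cmod (cinner (T (?S y)) y)"
      by (metis abs_le_iff cmod_def norm_of_real order_refl abs_power2 power2_abs)
    also have "\<dots> \<le> norm (T (?S y)) * norm y" by (rule cauchy_schwarz)
    also have "\<dots> \<le> norm (?S y) * B * norm y" using B by (simp add: mult_right_mono)
    finally have "norm (?S y) * norm (?S y) \<le> norm (?S y) * (norm y * B)"
      by (simp add: power2_eq_square mult_ac)
    thus ?thesis
      using Bp by (cases "norm (?S y) = 0") (auto simp: mult_le_cancel_left)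
  qed
  have "bounded_linear ?S"
    by (rule bounded_linear_intro[where K=B]) (auto simp: add bd cs[of "complex_of_real _", unfolded cscale_of_real])
  thus ?thesis using cs by (simp add: bop_def)
qed

lemma adj_adj: "T \<in> bop \<Longrightarrow> adj (adj T) = T"
  by (rule adj_char) (metis adj_prop cinner_commute)

lemma adj_comp: "A \<in> bop \<Longrightarrow> B \<in> bop \<Longrightarrow> adj (A \<circ> B) = adj B \<circ> adj A"
  by (rule adj_char) (simp add: adj_prop)

lemma bop_comp: "A \<in> bop \<Longrightarrow> B \<in> bop \<Longrightarrow> A \<circ> B \<in> bop"
  by (auto simp: bop_def comp_def intro: bounded_linear_compose)



lemma proj_bop: "is_proj Q \<Longrightarrow> Q \<in> bop" by (simp add: is_proj_def)
lemma proj_idem: "is_proj Q \<Longrightarrow> Q (Q x) = Q x" by (metis comp_apply is_proj_def)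
lemma proj_sym: "is_proj Q \<Longrightarrow> cinner (Q x) y = cinner x (Q y)"
  by (metis adj_prop is_proj_def)
lemma proj_bl: "is_proj Q \<Longrightarrow> bounded_linear Q" by (simp add: is_proj_def bop_def)

lemma proj_inner_self:
  assumes "is_proj Q" shows "cinner x (Q x) = complex_of_real ((norm (Q x))\<^sup>2)"
  by (metis assms cinner_self proj_idem proj_sym)

lemma proj_pyth:
  assumes Q: "is_proj Q" shows "(norm (x::'a::chilbert))\<^sup>2 = (norm (Q x))\<^sup>2 + (norm (x - Q x))\<^sup>2"
proof -
  have "cinner (Q x) (x - Q x) = 0"
    by (simp add: proj_sym[OF Q] cinner_diff_right proj_idem[OF Q])
  thus ?thesis using norm_sq_add[of "Q x" "x - Q x"] by simp
qed

lemma proj_norm_le: "is_proj Q \<Longrightarrow> norm (Q x) \<le> norm x"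
  by (metis proj_pyth le_add_same_cancel1 norm_ge_zero power2_le_imp_le zero_le_power2)

lemma bop_diff: "A \<in> bop \<Longrightarrow> B \<in> bop \<Longrightarrow> (\<lambda>x. A x - B x) \<in> bop"
  by (auto simp: bop_def cscale_diff_right intro: bounded_linear_sub)

lemma proj_le_iff:
  fixes Q R :: "'a::chilbert \<Rightarrow> 'a"
  assumes Q: "is_proj Q" and R: "is_proj R"
  shows "op_le Q R \<longleftrightarrow> (\<forall>x. R (Q x) = Q x)"
proof
  assume le: "op_le Q R"
  show "\<forall>x. R (Q x) = Q x"
  proof
    fix x
    let ?y = "Q x"
    have "Re (cinner ?y (R ?y - Q ?y)) \<ge> 0" using le by (simp add: op_le_def positive_op_def)
    moreover have "cinner ?y (R ?y - Q ?y) = complex_of_real ((norm (R ?y))\<^sup>2) - complex_of_real ((norm ?y)\<^sup>2)"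
      by (simp only: cinner_diff_right proj_inner_self[OF R] proj_idem[OF Q] cinner_self)
    ultimately have "(norm ?y)\<^sup>2 \<le> (norm (R ?y))\<^sup>2" by simp
    moreover have "(norm ?y)\<^sup>2 = (norm (R ?y))\<^sup>2 + (norm (?y - R ?y))\<^sup>2" by (rule proj_pyth[OF R])
    ultimately have "norm (?y - R ?y) = 0" by simp
    thus "R ?y = ?y" by simp
  qed
next
  assume h: "\<forall>x. R (Q x) = Q x"
  have qr: "Q (R x) = Q x" for x
  proof (rule cinner_ext)
    fix y
    have "cinner y (Q (R x)) = cinner (R (Q y)) x" by (simp add: proj_sym[OF Q, symmetric] proj_sym[OF R, symmetric])
    also have "\<dots> = cinner y (Q x)" by (simp add: h proj_sym[OF Q])
    finally show "cinner y (Q (R x)) = cinner y (Q x)" .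
  qed
  have "norm (Q x) \<le> norm (R x)" for x using proj_norm_le[OF Q, of "R x"] qr by simp
  hence "(norm (Q x))\<^sup>2 \<le> (norm (R x))\<^sup>2" for x by (simp add: power_mono)
  hence pos: "positive_op (\<lambda>x. R x - Q x)"
    using bop_diff[OF proj_bop[OF R] proj_bop[OF Q]]
    by (simp add: positive_op_def cinner_diff_right proj_inner_self[OF R] proj_inner_self[OF Q])
  show "op_le Q R" using Q R pos by (simp add: op_le_def is_proj_def)
qed

lemma fix_closed: "bounded_linear R \<Longrightarrow> closed {x. R x = x}"
  by (intro closed_Collect_eq linear_continuous_on continuous_on_id)

lemma proj_sup_eq:
  fixes S :: "('a::chilbert \<Rightarrow> 'a) set"
  assumes SP: "\<forall>Q\<in>S. is_proj Q"
    and Kdef: "K = \<Inter>{F. closed F \<and> csubspace F \<and> (\<forall>Q\<in>S. \<forall>x. Q x \<in> F)}"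
  shows "closed K" "csubspace K" "\<forall>Q\<in>S. \<forall>x. Q x \<in> K" "proj_sup S = cproj K"
proof -
  show cl: "closed K" unfolding Kdef by (rule closed_Inter) auto
  show cs: "csubspace K" unfolding Kdef csubspace_def by (auto simp: csub_0 csub_add csub_cscale)
  show inK: "\<forall>Q\<in>S. \<forall>x. Q x \<in> K" unfolding Kdef by auto
  let ?P = "cproj K"
  have Pp: "is_proj ?P" by (rule cproj_is_proj[OF cl cs])
  have ub: "op_le Q ?P" if "Q \<in> S" for Q
    using proj_le_iff[OF _ Pp] SP that inK cproj_id[OF cl cs] by auto
  have least: "op_le ?P R" if R: "is_proj R" and ubR: "\<forall>Q\<in>S. op_le Q R" for R
  proof -
    let ?F = "{x. R x = x}"
    have "csubspace ?F" unfolding csubspace_def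
      using bop_linear[OF proj_bop[OF R]] by (auto simp: bl_add bl_zero)
    moreover have "closed ?F" by (rule fix_closed[OF proj_bl[OF R]])
    moreover have "\<forall>Q\<in>S. \<forall>x. Q x \<in> ?F" using ubR SP proj_le_iff[OF _ R] by auto
    ultimately have "K \<subseteq> ?F" unfolding Kdef by blast
    hence "\<forall>x. R (?P x) = ?P x" using cproj_in[OF cl cs] by auto
    thus ?thesis using proj_le_iff[OF Pp R] by simp
  qed
  show "proj_sup S = ?P" unfolding proj_sup_def
  proof (rule the_equality)
    show "is_proj ?P \<and> (\<forall>Q\<in>S. op_le Q ?P) \<and> (\<forall>R. is_proj R \<and> (\<forall>Q\<in>S. op_le Q R) \<longrightarrow> op_le ?P R)"
      using Pp ub least by blast
  next
    fix P' assume h: "is_proj P' \<and> (\<forall>Q\<in>S. op_le Q P') \<and> (\<forall>R. is_proj R \<and> (\<forall>Q\<in>S. op_le Q R) \<longrightarrow> op_le P' R)"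
    hence P': "is_proj P'" by blast
    have "op_le P' ?P" using h Pp ub by blast
    hence a: "\<forall>x. ?P (P' x) = P' x" using proj_le_iff[OF P' Pp] by simp
    have "op_le ?P P'" using h least by blast
    hence b: "\<forall>x. P' (?P x) = ?P x" using proj_le_iff[OF Pp P'] by simp
    show "P' = ?P"
    proof
      fix x show "P' x = ?P x"
      proof (rule cinner_ext)
        fix y
        have "cinner y (P' x) = cinner y (?P (P' x))" using a by simp
        also have "\<dots> = cinner (P' (?P y)) x" by (simp add: proj_sym[OF Pp, symmetric] proj_sym[OF P', symmetric])
        also have "\<dots> = cinner y (?P x)" using b by (simp add: proj_sym[OF Pp])
        finally show "cinner y (P' x) = cinner y (?P x)" .
      qed
    qed
  qed
qed

lemma comm_bop: "commutant A \<subseteq> bop" by (auto simp: commutant_def)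
lemma comm_anti: "A \<subseteq> B \<Longrightarrow> commutant B \<subseteq> commutant A" by (auto simp: commutant_def)
lemma comm_double: "A \<subseteq> bop \<Longrightarrow> A \<subseteq> commutant (commutant A)" by (auto simp: commutant_def)
lemma comm_triple: assumes "A \<subseteq> bop" shows "commutant (commutant (commutant A)) = commutant A"
proof
  show "commutant (commutant (commutant A)) \<subseteq> commutant A"
    by (rule comm_anti[OF comm_double]) fact
  show "commutant A \<subseteq> commutant (commutant (commutant A))" by (rule comm_double[OF comm_bop])
qed

lemma comm_adj:
  assumes A: "\<forall>X\<in>A. X \<in> bop \<and> adj X \<in> A" and T: "T \<in> commutant A"
  shows "adj T \<in> commutant A"
proof -
  have Tb: "T \<in> bop" using T by (simp add: commutant_def)
  have "adj T \<circ> X = X \<circ> adj T" if X: "X \<in> A" for X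
  proof -
    have Xb: "X \<in> bop" and aX: "adj X \<in> A" using A X by auto
    have aXb: "adj X \<in> bop" using A aX by auto
    have "T \<circ> adj X = adj X \<circ> T" using T aX by (simp add: commutant_def)
    hence "adj (adj X \<circ> T) = adj (T \<circ> adj X)" by simp
    thus ?thesis by (simp add: adj_comp aXb Tb adj_adj Xb)
  qed
  thus ?thesis using adj_bop[OF Tb] by (simp add: commutant_def)
qed



lemma onorm_conj:
  assumes D: "bounded_linear D" and Vn: "\<And>x. norm (V x) = norm x"
  shows "onorm (\<lambda>x. V (D (V x))) \<le> onorm D"
proof (rule onorm_bound[OF onorm_pos_le[OF D]])
  fix x
  have "norm (V (D (V x))) = norm (D (V x))" by (rule Vn)
  also have "\<dots> \<le> onorm D * norm (V x)" by (rule onorm[OF D])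
  finally show "norm (V (D (V x))) \<le> onorm D * norm x" by (simp add: Vn)
qed

lemma invariance:
  fixes S :: "('a::chilbert \<Rightarrow> 'a) set"
  assumes Kdef: "K = \<Inter>{F. closed F \<and> csubspace F \<and> (\<forall>Q\<in>S. \<forall>x. Q x \<in> F)}"
    and cs: "csubspace K" and cl: "closed K"
    and T: "T \<in> bop" and TQ: "\<forall>Q\<in>S. \<forall>x. T (Q x) \<in> K"
  shows "\<forall>x\<in>K. T x \<in> K"
proof -
  have bl: "bounded_linear T" and tc: "\<And>c x. T (cscale c x) = cscale c (T x)"
    using bop_linear[OF T] by auto
  let ?F = "T -` K"
  have "closed ?F" by (rule continuous_closed_vimage[OF cl]) (rule linear_continuous_at[OF bl])
  moreover have "csubspace ?F" unfolding csubspace_def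
    using cs by (auto simp: bl_add[OF bl] bl_zero[OF bl] tc csub_0 csub_add csub_cscale)
  moreover have "\<forall>Q\<in>S. \<forall>x. Q x \<in> ?F" using TQ by auto
  ultimately have "K \<subseteq> ?F" unfolding Kdef by blast
  thus ?thesis by auto
qed

lemma commute_proj:
  fixes K :: "'a::chilbert set"
  assumes cl: "closed K" and cs: "csubspace K" and T: "T \<in> bop"
    and TK: "\<forall>x\<in>K. T x \<in> K" and aTK: "\<forall>x\<in>K. adj T x \<in> K"
  shows "T \<circ> cproj K = cproj K \<circ> T"
proof -
  let ?P = "cproj K"
  have Pp: "is_proj ?P" by (rule cproj_is_proj[OF cl cs])
  have Pb: "?P \<in> bop" and aP: "adj ?P = ?P" using Pp by (auto simp: is_proj_def)
  have aTb: "adj T \<in> bop" by (rule adj_bop[OF T])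
  have e1: "adj T \<circ> ?P = ?P \<circ> (adj T \<circ> ?P)"
    using aTK cproj_in[OF cl cs] cproj_id[OF cl cs] by (auto simp: fun_eq_iff)
  have e2: "T \<circ> ?P = ?P \<circ> (T \<circ> ?P)"
    using TK cproj_in[OF cl cs] cproj_id[OF cl cs] by (auto simp: fun_eq_iff)
  have "?P \<circ> T = adj (adj T \<circ> ?P)" by (simp add: adj_comp aTb Pb aP adj_adj T)
  also have "\<dots> = adj (?P \<circ> (adj T \<circ> ?P))" using e1 by simp
  also have "\<dots> = ?P \<circ> (T \<circ> ?P)" by (simp add: adj_comp aTb Pb aP adj_adj T bop_comp o_assoc)
  also have "\<dots> = T \<circ> ?P" using e2 by simp
  finally show ?thesis by simp
qed

theorem main:
  fixes M :: "('a::chilbert \<Rightarrow> 'a) set"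
    and E :: "real \<Rightarrow> ('a \<Rightarrow> 'a)"
  assumes vN: "von_neumann_algebra M"
    and sr: "affiliated_spectral_resolution M E"
  shows "P_ac_inf M E \<in> commutant (vN_generated M (range E)) \<inter> M"
proof -
  have Mb: "M \<subseteq> bop" and Madj: "\<And>T. T \<in> M \<Longrightarrow> adj T \<in> M"
    and Mcc: "commutant (commutant M) = M" using vN by (auto simp: von_neumann_algebra_def)
  have EM: "E s \<in> M" and Ep: "is_proj (E s)" for s using sr by (auto simp: affiliated_spectral_resolution_def)
  have Emono: "s \<le> t \<Longrightarrow> E s \<circ> E t = E s" for s t using sr by (auto simp: affiliated_spectral_resolution_def)
  have Eb: "E s \<in> bop" for s using Ep[of s] by (simp add: is_proj_def)
  have Ebl: "bounded_linear (E s)" for s using Eb[of s] by (simp add: bop_def)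
  have Ecs: "E s (cscale c x) = cscale c (E s x)" for s c x using Eb[of s] by (simp add: bop_def)
  have Eadj: "adj (E s) = E s" for s using Ep[of s] by (simp add: is_proj_def)
  have Ecomm: "E s \<circ> E t = E t \<circ> E s" for s t
  proof -
    have *: "E t \<circ> E s = E s \<circ> E t" if "s \<le> t" for s t
    proof -
      have "E t \<circ> E s = adj (E s \<circ> E t)" by (simp add: adj_comp Eb Eadj)
      also have "\<dots> = E s" using Emono[OF that] Eadj by simp
      finally show ?thesis using Emono[OF that] by simp
    qed
    show ?thesis
    proof (cases "s \<le> t")
      case True thus ?thesis using *[OF True] by simp
    next
      case False hence "t \<le> s" by simp
      thus ?thesis using *[of t s] by simp
    qed
  qed
  have Ecomm': "E s (E t x) = E t (E s x)" for s t x using Ecomm[of s t] by (metis comp_apply)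
  have MC: "X \<circ> Y = Y \<circ> X" if "X \<in> M" "Y \<in> commutant M" for X Y
    using that by (simp add: commutant_def)
  define U where "U s = (\<lambda>x. scaleR 2 (E s x) - x)" for s
  have Ubl: "bounded_linear (U s)" for s unfolding U_def
    by (intro bounded_linear_sub bounded_linear_compose[OF bounded_linear_scaleR_right] Ebl bounded_linear_ident)
  have Ub: "U s \<in> bop" for s using Ubl[of s]
    by (simp add: bop_def U_def Ecs cscale_diff_right cscale_scaleR)
  have Usym: "cinner (U s x) y = cinner x (U s y)" for s x y
    by (simp add: U_def cinner_diff_left cinner_diff_right cinner_scaleR_left cinner_scaleR_right proj_sym[OF Ep])
  have Uadj: "adj (U s) = U s" for s by (rule adj_char) (rule Usym)
  have Uinv: "U s (U s x) = x" for s x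
    by (simp add: U_def bl_diff[OF Ebl] bl_scale[OF Ebl] bl_add[OF Ebl] proj_idem[OF Ep] algebra_simps scaleR_2)
  have Unorm: "norm (U s x) = norm x" for s x
  proof -
    have "complex_of_real ((norm (U s x))\<^sup>2) = complex_of_real ((norm x)\<^sup>2)"
      by (simp only: cinner_self[symmetric] Usym Uinv)
    hence "(norm (U s x))\<^sup>2 = (norm x)\<^sup>2" using of_real_eq_iff by blast
    thus ?thesis by (simp add: power2_eq_iff_nonneg)
  qed
  have UE: "U s (E t x) = E t (U s x)" for s t x
    by (simp add: U_def bl_diff[OF Ebl] bl_scale[OF Ebl] Ecomm')
  have UM: "U s \<in> M" for s
  proof -
    have "U s \<circ> Y = Y \<circ> U s" if Y: "Y \<in> commutant M" for Y
    proof -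
      have Yb: "bounded_linear Y" using Y by (auto simp: commutant_def bop_def)
      have "E s \<circ> Y = Y \<circ> E s" using MC[OF EM Y] by simp
      thus ?thesis by (auto simp: fun_eq_iff U_def bl_diff[OF Yb] bl_scale[OF Yb])
    qed
    hence "U s \<in> commutant (commutant M)" using Ub by (simp add: commutant_def)
    thus ?thesis using Mcc by simp
  qed
  define S where "S = {Q. norm_ac_proj M E Q}"
  have SP: "\<forall>Q\<in>S. is_proj Q" by (simp add: S_def norm_ac_proj_def)
  have SM: "\<forall>Q\<in>S. Q \<in> M" by (simp add: S_def norm_ac_proj_def)
  have Sinv: "U s \<circ> Q \<circ> U s \<in> S" if Q: "Q \<in> S" for s Q
  proof -
    let ?V = "U s" let ?W = "U s \<circ> Q \<circ> U s"
    have Qp: "is_proj Q" and QM: "Q \<in> M" using Q SP SM by auto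
    have Qb: "Q \<in> bop" using Qp by (simp add: is_proj_def)
    have Qbl: "bounded_linear Q" using Qb by (simp add: bop_def)
    have WM: "?W \<in> M"
    proof -
      have "?W \<circ> Y = Y \<circ> ?W" if Y: "Y \<in> commutant M" for Y
      proof -
        have "?V \<circ> Y = Y \<circ> ?V" using MC[OF UM Y] by simp
        moreover have "Q \<circ> Y = Y \<circ> Q" using MC[OF QM Y] by simp
        ultimately show ?thesis by (metis o_assoc)
      qed
      moreover have "?W \<in> bop" by (intro bop_comp Ub Qb)
      ultimately have "?W \<in> commutant (commutant M)" by (simp add: commutant_def)
      thus ?thesis using Mcc by simp
    qed
    have Wp: "is_proj ?W"
    proof -
      have "?W \<in> bop" by (intro bop_comp Ub Qb)
      moreover have "?W \<circ> ?W = ?W" by (simp add: fun_eq_iff Uinv proj_idem[OF Qp])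
      moreover have "adj ?W = ?W"
        using Qp by (simp add: adj_comp bop_comp Ub Qb Uadj is_proj_def o_assoc)
      ultimately show ?thesis by (simp add: is_proj_def)
    qed
    have Wac: "\<forall>a b \<epsilon>. a < b \<and> \<epsilon> > 0 \<longrightarrow> (\<exists>\<delta>>0.
        \<forall>(n::nat) (aa::nat \<Rightarrow> real) (bb::nat \<Rightarrow> real).
          (\<forall>i<n. a \<le> aa i \<and> aa i < bb i \<and> bb i \<le> b) \<and>
          (\<forall>i<n. \<forall>j<n. i \<noteq> j \<longrightarrow> bb i \<le> aa j \<or> bb j \<le> aa i) \<and>
          (\<Sum>i<n. bb i - aa i) < \<delta>
          \<longrightarrow> (\<Sum>i<n. onorm (\<lambda>x. ?W (E (bb i) (?W x)) - ?W (E (aa i) (?W x)))) < \<epsilon>)"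
    proof (intro allI impI)
      fix a b \<epsilon> :: real assume ab: "a < b \<and> \<epsilon> > 0"
      obtain \<delta> where d: "\<delta> > 0" and dQ: "\<forall>(n::nat) (aa::nat \<Rightarrow> real) (bb::nat \<Rightarrow> real).
          (\<forall>i<n. a \<le> aa i \<and> aa i < bb i \<and> bb i \<le> b) \<and>
          (\<forall>i<n. \<forall>j<n. i \<noteq> j \<longrightarrow> bb i \<le> aa j \<or> bb j \<le> aa i) \<and>
          (\<Sum>i<n. bb i - aa i) < \<delta>
          \<longrightarrow> (\<Sum>i<n. onorm (\<lambda>x. Q (E (bb i) (Q x)) - Q (E (aa i) (Q x)))) < \<epsilon>"
        using Q ab unfolding S_def norm_ac_proj_def by blast
      have termb: "onorm (\<lambda>x. ?W (E t (?W x)) - ?W (E r (?W x)))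
          \<le> onorm (\<lambda>x. Q (E t (Q x)) - Q (E r (Q x)))" for t r
      proof -
        let ?D = "\<lambda>x. Q (E t (Q x)) - Q (E r (Q x))"
        have Dbl: "bounded_linear ?D"
          by (intro bounded_linear_sub bounded_linear_compose[OF Qbl] bounded_linear_compose[OF Ebl] Qbl)
        have "(\<lambda>x. ?W (E t (?W x)) - ?W (E r (?W x))) = (\<lambda>x. ?V (?D (?V x)))"
          by (simp add: fun_eq_iff UE[symmetric] Uinv bl_diff[OF Ubl])
        thus ?thesis using onorm_conj[OF Dbl Unorm] by simp
      qed
      show "\<exists>\<delta>>0. \<forall>(n::nat) (aa::nat \<Rightarrow> real) (bb::nat \<Rightarrow> real).
          (\<forall>i<n. a \<le> aa i \<and> aa i < bb i \<and> bb i \<le> b) \<and>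
          (\<forall>i<n. \<forall>j<n. i \<noteq> j \<longrightarrow> bb i \<le> aa j \<or> bb j \<le> aa i) \<and>
          (\<Sum>i<n. bb i - aa i) < \<delta>
          \<longrightarrow> (\<Sum>i<n. onorm (\<lambda>x. ?W (E (bb i) (?W x)) - ?W (E (aa i) (?W x)))) < \<epsilon>"
      proof (intro exI[of _ \<delta>] conjI d allI impI)
        fix n :: nat and aa bb :: "nat \<Rightarrow> real"
        assume h: "(\<forall>i<n. a \<le> aa i \<and> aa i < bb i \<and> bb i \<le> b) \<and>
          (\<forall>i<n. \<forall>j<n. i \<noteq> j \<longrightarrow> bb i \<le> aa j \<or> bb j \<le> aa i) \<and>
          (\<Sum>i<n. bb i - aa i) < \<delta>"
        have "(\<Sum>i<n. onorm (\<lambda>x. ?W (E (bb i) (?W x)) - ?W (E (aa i) (?W x))))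
            \<le> (\<Sum>i<n. onorm (\<lambda>x. Q (E (bb i) (Q x)) - Q (E (aa i) (Q x))))"
          by (rule sum_mono) (rule termb)
        also have "\<dots> < \<epsilon>" using dQ h by blast
        finally show "(\<Sum>i<n. onorm (\<lambda>x. ?W (E (bb i) (?W x)) - ?W (E (aa i) (?W x)))) < \<epsilon>" .
      qed
    qed
    show ?thesis unfolding S_def norm_ac_proj_def using WM Wp Wac by blast
  qed
  define K where "K = \<Inter>{F. closed F \<and> csubspace F \<and> (\<forall>Q\<in>S. \<forall>x. Q x \<in> F)}"
  note ps = proj_sup_eq[OF SP K_def]
  have cl: "closed K" and cs: "csubspace K" and inK: "\<forall>Q\<in>S. \<forall>x. Q x \<in> K" using ps by auto
  define P where "P = cproj K"
  have Peq: "P_ac_inf M E = P" unfolding P_ac_inf_def P_def using ps(4) S_def by simp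
  have Pp: "is_proj P" unfolding P_def by (rule cproj_is_proj[OF cl cs])
  have Pb: "P \<in> bop" using Pp by (simp add: is_proj_def)
  have Pbl: "bounded_linear P" using Pb by (simp add: bop_def)
  have PM: "P \<in> M"
  proof -
    have Madj': "\<forall>X\<in>M. X \<in> bop \<and> adj X \<in> M" using Mb Madj by auto
    have "T \<circ> P = P \<circ> T" if T: "T \<in> commutant M" for T
    proof -
      have Tb: "T \<in> bop" using T by (simp add: commutant_def)
      have aT: "adj T \<in> commutant M" by (rule comm_adj[OF Madj' T])
      have aTb: "adj T \<in> bop" using aT by (simp add: commutant_def)
      have inv: "\<forall>x\<in>K. X x \<in> K" if X: "X \<in> commutant M" "X \<in> bop" for X
      proof (rule invariance[OF K_def cs cl X(2)])
        show "\<forall>Q\<in>S. \<forall>x. X (Q x) \<in> K"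
        proof (intro ballI allI)
          fix Q x assume Q: "Q \<in> S"
          have "Q \<circ> X = X \<circ> Q" using MC[OF _ X(1)] SM Q by blast
          hence "X (Q x) = Q (X x)" by (metis comp_apply)
          thus "X (Q x) \<in> K" using inK Q by simp
        qed
      qed
      show ?thesis unfolding P_def
        by (rule commute_proj[OF cl cs Tb inv[OF T Tb] inv[OF aT aTb]])
    qed
    hence "P \<in> commutant (commutant M)" using Pb by (auto simp: commutant_def)
    thus ?thesis using Mcc by simp
  qed
  have PE: "P \<circ> E s = E s \<circ> P" for s
  proof -
    have inv: "\<forall>x\<in>K. U s x \<in> K"
    proof (rule invariance[OF K_def cs cl Ub])
      show "\<forall>Q\<in>S. \<forall>x. U s (Q x) \<in> K"
      proof (intro ballI allI)
        fix Q x assume Q: "Q \<in> S"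
        have "U s (Q x) = (U s \<circ> Q \<circ> U s) (U s x)" by (simp add: Uinv)
        moreover have "(U s \<circ> Q \<circ> U s) (U s x) \<in> K" using inK Sinv[OF Q] by blast
        ultimately show "U s (Q x) \<in> K" by simp
      qed
    qed
    have UP: "U s \<circ> P = P \<circ> U s" unfolding P_def
      by (rule commute_proj[OF cl cs Ub inv]) (simp add: Uadj inv)
    have Eform: "E s x = scaleR (1/2) (U s x + x)" for x by (simp add: U_def)
    show ?thesis
    proof
      fix x
      have "P (U s x) = U s (P x)" using UP by (metis comp_apply)
      thus "(P \<circ> E s) x = (E s \<circ> P) x"
        by (simp add: Eform[of x] Eform[of "P x"] bl_scale[OF Pbl] bl_add[OF Pbl])
    qed
  qed
  define C where "C = commutant (range E)"
  define N where "N = commutant C"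
  have rEb: "range E \<subseteq> bop" using Eb by auto
  have rEadj: "\<forall>X\<in>range E. X \<in> bop \<and> adj X \<in> range E" using Eb Eadj by auto
  have Cb: "C \<subseteq> bop" unfolding C_def by (rule comm_bop)
  have Cadj: "\<forall>X\<in>C. X \<in> bop \<and> adj X \<in> C" using Cb comm_adj[OF rEadj] unfolding C_def by auto
  have vNN: "von_neumann_algebra N"
    unfolding von_neumann_algebra_def N_def
    using comm_bop[of C] comm_adj[OF Cadj] comm_triple[OF Cb] by auto
  have NM: "N \<subseteq> M"
  proof -
    have "commutant M \<subseteq> C" unfolding C_def by (rule comm_anti) (use EM in auto)
    hence "N \<subseteq> commutant (commutant M)" unfolding N_def by (rule comm_anti)
    thus ?thesis using Mcc by simp
  qed
  have EN: "range E \<subseteq> N" unfolding N_def C_def by (rule comm_double[OF rEb])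
  have genN: "vN_generated M (range E) \<subseteq> N"
    unfolding vN_generated_def using vNN NM EN by blast
  have PC: "P \<in> C" unfolding C_def commutant_def using Pb PE by auto
  have "P \<in> commutant N" unfolding N_def using comm_double[OF Cb] PC by blast
  hence "P \<in> commutant (vN_generated M (range E))" using comm_anti[OF genN] by blast
  thus ?thesis using Peq PM by simp
qed


theorem proposition5p6:
  fixes M :: "('a::chilbert \<Rightarrow> 'a) set"
    and \<tau> :: "('a \<Rightarrow> 'a) \<Rightarrow> ennreal"
    and E :: "real \<Rightarrow> ('a \<Rightarrow> 'a)"
  assumes "von_neumann_algebra M"
    and "countably_decomposable M"
    and "properly_infinite M"
    and "faithful_normal_semifinite_trace M \<tau>"
    and "affiliated_spectral_resolution M E"
  shows "P_ac_inf M E \<in> commutant (vN_generated M (range E)) \<inter> M"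
  by (rule main[OF assms(1) assms(5)])

end
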